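(* Let $K$ be a field of characteristic $\neq 2$, $n\ge1$, and let $\mathcal C$ be an EACP over $K$ with natural basis $\{h_1,\dots,h_n,r\}$ and structural constants $a_{ij},b_i$, and suppose $\det(a_{ij})_{i,j=1}^n\neq0$. For $a\in\mathcal C$ let $L_a:\mathcal C\to\mathcal C$, $L_a(x)=ax$, and write $L_i=L_{h_i}$. Then the set of all left multiplication operators $\{L_a: a\in\mathcal C\}$ equals the linear span of $\{L_1,\dots,L_n,L_r\}$, the map $a\mapsto L_a$ is injective, and this span has the same dimension $n+1$ as $\mathcal C$ (so $\{L_1,\dots,L_n,L_r\}$ is a basis of it).
   Context: An EACP over a field $K$ (characteristic $\neq 2$) is a $K$-algebra $\mathcal C$ with a basis $\{h_1,\dots,h_n,r\}$ (called a natural basis) whose multiplication is determined by bilinearity from $$h_ir=rh_i=\tfrac12\Big(\sum_{j=1}^n a_{ij}h_j+b_ir\Big),\qquad h_ih_j=0\ (i,j=1,\dots,n),\qquad rr=0,$$ for some constants $a_{ij},b_i\in K$. *)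

theory Defs
  imports "HOL-Analysis.Analysis" "HOL-Library.Function_Algebras"
begin

text \<open>An EACP with natural basis h_1..h_n, r is modelled on coordinate vectors
  'k^('n option): index Some i is the coordinate of h_i, index None that of r.
  Structural constants: A i j = a_ij, b i = b_i.\<close>

definition eacp_basis :: "'n option \<Rightarrow> 'k::field^('n::finite option)" where
  "eacp_basis p = axis p 1"

text \<open>Multiplication table on the natural basis.\<close>
definition eacp_table :: "('n::finite \<Rightarrow> 'n \<Rightarrow> 'k::field) \<Rightarrow> ('n \<Rightarrow> 'k)
    \<Rightarrow> 'n option \<Rightarrow> 'n option \<Rightarrow> 'k^('n option)" where
  "eacp_table A b p q =
     (case (p, q) of
        (Some i, None) \<Rightarrow> (1/2) *s ((\<Sum>j\<in>UNIV. A i j *s eacp_basis (Some j)) + b i *s eacp_basis None)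
      | (None, Some i) \<Rightarrow> (1/2) *s ((\<Sum>j\<in>UNIV. A i j *s eacp_basis (Some j)) + b i *s eacp_basis None)
      | _ \<Rightarrow> 0)"

text \<open>Multiplication, determined by bilinearity from the table.\<close>
definition eacp_mult :: "('n::finite \<Rightarrow> 'n \<Rightarrow> 'k::field) \<Rightarrow> ('n \<Rightarrow> 'k)
    \<Rightarrow> 'k^('n option) \<Rightarrow> 'k^('n option) \<Rightarrow> 'k^('n option)" where
  "eacp_mult A b x y = (\<Sum>p\<in>UNIV. \<Sum>q\<in>UNIV. (x $ p * y $ q) *s eacp_table A b p q)"

text \<open>Left multiplication operator L_a.\<close>
definition eacp_L :: "('n::finite \<Rightarrow> 'n \<Rightarrow> 'k::field) \<Rightarrow> ('n \<Rightarrow> 'k)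
    \<Rightarrow> 'k^('n option) \<Rightarrow> ('k^('n option) \<Rightarrow> 'k^('n option))" where
  "eacp_L A b a = (\<lambda>x. eacp_mult A b a x)"

text \<open>Pointwise scalar multiplication on operators C \<rightarrow> C (K-vector space structure).\<close>
definition op_scale :: "'k::field \<Rightarrow> ('v \<Rightarrow> 'k^'m) \<Rightarrow> ('v \<Rightarrow> 'k^'m)" where
  "op_scale c f = (\<lambda>x. c *s f x)"

end

theory Submission
  imports Defs
begin
lemma sum_opt: "sum f (UNIV::'n::finite option set) = f None + (\<Sum>i\<in>UNIV. f (Some i))"
  by (simp add: UNIV_option_conv sum.reindex)

definition TT :: "('n::finite \<Rightarrow> 'n \<Rightarrow> 'k::field) \<Rightarrow> ('n \<Rightarrow> 'k) \<Rightarrow> 'n \<Rightarrow> 'n option \<Rightarrow> 'k" where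
  "TT A b i q = (case q of Some j \<Rightarrow> A i j | None \<Rightarrow> b i)"

lemma basis_nth: "eacp_basis p $ q = (if q = p then 1 else 0)"
  by (simp add: eacp_basis_def axis_def)

lemma tab: "eacp_table A b p p' $ q =
  (case (p, p') of (Some i, None) \<Rightarrow> (1/2) * TT A b i q | (None, Some i) \<Rightarrow> (1/2) * TT A b i q | _ \<Rightarrow> 0)"
  by (cases q; cases p; cases p') (simp_all add: eacp_table_def TT_def basis_nth sum_component if_distrib sum.delta cong: if_cong)

lemma mult_nth: "eacp_mult A b x y $ q =
   (\<Sum>i\<in>UNIV. (x $ Some i * y $ None + x $ None * y $ Some i) * ((1/2) * TT A b i q))"
  unfolding eacp_mult_def
  by (simp add: sum_component sum_opt tab algebra_simps sum.distrib)

lemma vs_op: "vector_space (op_scale :: 'k::field \<Rightarrow> ('v \<Rightarrow> 'k^'m) \<Rightarrow> _)"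
  by unfold_locales (auto simp: op_scale_def fun_eq_iff vector_space_over_itself.scale_right_distrib
     vec.scale_right_distrib vec.scale_left_distrib)

lemma lin: fixes A :: "'n::finite \<Rightarrow> 'n \<Rightarrow> 'k::field" shows "Vector_Spaces.linear (*s) op_scale (eacp_L A b)"
proof -
  show ?thesis
    apply (rule linear_module_homI)
    unfolding module_hom_def module_hom_axioms_def module_iff_vector_space
    using vec.vector_space_axioms vs_op by (auto simp: eacp_L_def op_scale_def fun_eq_iff vec_eq_iff mult_nth algebra_simps sum.distrib sum_distrib_left)
qed
lemma ker:
  fixes A :: "'n::finite \<Rightarrow> 'n \<Rightarrow> 'k::field" and b :: "'n \<Rightarrow> 'k"
  assumes char: "(2::'k) \<noteq> 0"
    and det: "det (\<chi> i j. A i j) \<noteq> 0"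
    and z: "eacp_L A b a = 0"
  shows "a = 0"
proof -
  let ?M = "(\<chi> i j. A i j) :: 'k^'n^'n"
  define \<alpha> :: "'k^'n" where "\<alpha> = (\<chi> i. a $ Some i)"
  have z1: "eacp_mult A b a y $ q = 0" for y q using z by (simp add: eacp_L_def fun_eq_iff)
  have s1: "(\<Sum>i\<in>UNIV. a $ Some i * A i j) = 0" for j
  proof -
    have "eacp_mult A b a (eacp_basis None) $ Some j = 0" by (rule z1)
    hence "(1/2) * (\<Sum>i\<in>UNIV. a $ Some i * A i j) = 0"
      by (simp add: mult_nth basis_nth TT_def sum_distrib_left algebra_simps)
    thus ?thesis using char by simp
  qed
  have "transpose ?M *v \<alpha> = 0"
    using s1 by (simp add: vec_eq_iff matrix_vector_mult_def transpose_def \<alpha>_def mult.commute)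
  moreover have "invertible (transpose ?M)" using det by (simp add: invertible_det_nz)
  ultimately have "\<alpha> = 0"
    using inj_matrix_vector_mult[of "transpose ?M"] by (metis injD matrix_vector_mult_0_right)
  hence aS: "a $ Some i = 0" for i by (simp add: \<alpha>_def vec_eq_iff)
  have aN: "a $ None = 0"
  proof (rule ccontr)
    assume ne: "a $ None \<noteq> 0"
    obtain k :: 'n where True by blast
    have "A k j = 0" for j
    proof -
      have "eacp_mult A b a (eacp_basis (Some k)) $ Some j = 0" by (rule z1)
      moreover have "eacp_mult A b a (eacp_basis (Some k)) $ Some j
          = (\<Sum>i\<in>UNIV. if i = k then (1/2) * (a $ None * A k j) else 0)"
        unfolding mult_nth by (rule sum.cong) (auto simp: basis_nth TT_def aS)
      ultimately have "(1/2) * (a $ None * A k j) = 0" by simp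
      thus ?thesis using char ne by simp
    qed
    hence "row k ?M = 0" by (simp add: row_def vec_eq_iff)
    hence "det ?M = 0" by (rule det_zero_row(2))
    thus False using det by simp
  qed
  show ?thesis using aS aN by (simp add: vec_eq_iff) (metis not_None_eq)
qed
theorem mainTheorem10:
  fixes A :: "'n::finite \<Rightarrow> 'n \<Rightarrow> 'k::field" and b :: "'n \<Rightarrow> 'k"
  assumes char: "(2::'k) \<noteq> 0"
    and det: "det (\<chi> i j. A i j) \<noteq> 0"
  defines "Ls \<equiv> (\<lambda>i. eacp_L A b (eacp_basis (Some i))) ` UNIV \<union> {eacp_L A b (eacp_basis None)}"
  shows "range (eacp_L A b) = module.span op_scale Ls
     \<and> inj (eacp_L A b)
     \<and> vector_space.dim op_scale (module.span op_scale Ls) = CARD('n) + 1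
     \<and> vector_space.dim op_scale (module.span op_scale Ls) = vec.dim (UNIV :: ('k^('n option)) set)"
proof -
  interpret V: vector_space "op_scale :: 'k \<Rightarrow> ('k^'n option \<Rightarrow> 'k^'n option) \<Rightarrow> _"
    by (rule vs_op)
  interpret P: finite_dimensional_vector_space_pair_1 "(*s)" cart_basis
     "op_scale :: 'k \<Rightarrow> ('k^'n option \<Rightarrow> 'k^'n option) \<Rightarrow> _" ..
  have lf: "Vector_Spaces.linear (*s) op_scale (eacp_L A b)" by (rule lin)
  have inj: "inj (eacp_L A b)"
    unfolding P.linear_inj_iff_eq_0[OF lf] using ker[OF char det] by blast
  have LsE: "Ls = eacp_L A b ` cart_basis"
    unfolding Ls_def cart_basis_def eacp_basis_def
    by (auto simp: image_iff) (metis not_None_eq)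
  have R: "range (eacp_L A b) = V.span Ls"
    unfolding LsE P.linear_span_image[OF lf] vec.span_Basis ..
  have D: "V.dim (V.span Ls) = vec.dim (UNIV :: ('k^('n option)) set)"
    unfolding R[symmetric] using P.dim_image_eq[OF lf] inj by (simp add: inj_on_def inj_def)
  have C: "vec.dim (UNIV :: ('k^('n option)) set) = CARD('n) + 1"
    by (subst vec_dim_card) simp
  show ?thesis using R inj D C by simp
qed
end
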